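(* If a Banach space $Z$ admits a coarse embedding into $L_2$, then $Z$ (with its norm metric) is $\Lambda$-nontrivial.
   Context: A map $f:Z\to L_2$ is a coarse embedding if there are non-decreasing $\alpha,\beta:[0,\infty)\to[0,\infty)$ with $\beta(t)\to\infty$ and $\beta(\|x-y\|)\le\|f(x)-f(y)\|_2\le\alpha(\|x-y\|)$ for all $x,y$. A map $f:X\to L_2$ is $\tau$-thresholding if $d(x,y)\ge\tau$ implies $\|f(x)-f(y)\|_2\ge\tau$. Define $\Lambda_\tau(X,\varepsilon)=\inf\big\{\sup_{x,y\in X,\ d(x,y)\ge\varepsilon\tau}\frac{\varepsilon\|f(x)-f(y)\|_2}{d(x,y)}: f:X\to L_2\text{ is }\tau\text{-thresholding}\big\}$ and $\Lambda(X,\varepsilon)=\sup_{\tau>0}\Lambda_\tau(X,\varepsilon)$. $(X,d)$ is $\Lambda$-nontrivial if $\liminf_{\varepsilon\to0}\Lambda(X,\varepsilon)=0$. *)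

theory Defs
  imports "HOL-Analysis.Analysis"
begin

text \<open>L_2 is modelled concretely as the sequence space of square-summable real
sequences (isometrically isomorphic to L_2[0,1]).\<close>

definition L2 :: "(nat \<Rightarrow> real) set" where
  "L2 = {x. summable (\<lambda>n. (x n)\<^sup>2)}"

definition L2_dist :: "(nat \<Rightarrow> real) \<Rightarrow> (nat \<Rightarrow> real) \<Rightarrow> real" where
  "L2_dist x y = sqrt (\<Sum>n. (x n - y n)\<^sup>2)"

definition coarse_embedding_L2 :: "('a::real_normed_vector \<Rightarrow> (nat \<Rightarrow> real)) \<Rightarrow> bool" where
  "coarse_embedding_L2 f \<longleftrightarrow> (\<forall>x. f x \<in> L2) \<and>
     (\<exists>\<alpha> \<beta> :: real \<Rightarrow> real.
        mono_on {0..} \<alpha> \<and> mono_on {0..} \<beta> \<and>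
        (\<forall>t\<ge>0. \<alpha> t \<ge> 0 \<and> \<beta> t \<ge> 0) \<and>
        filterlim \<beta> at_top at_top \<and>
        (\<forall>x y. \<beta> (norm (x - y)) \<le> L2_dist (f x) (f y) \<and>
               L2_dist (f x) (f y) \<le> \<alpha> (norm (x - y))))"

definition thresholding :: "real \<Rightarrow> 'a::metric_space set \<Rightarrow> ('a \<Rightarrow> (nat \<Rightarrow> real)) \<Rightarrow> bool" where
  "thresholding \<tau> X f \<longleftrightarrow> (\<forall>x\<in>X. f x \<in> L2) \<and>
     (\<forall>x\<in>X. \<forall>y\<in>X. dist x y \<ge> \<tau> \<longrightarrow> L2_dist (f x) (f y) \<ge> \<tau>)"

text \<open>Lambda_tau(X, eps); values in the extended reals (sup may be infinite,
inf over an empty family is +infinity; the sup over an empty set of pairs is taken as 0).\<close>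
definition Lambda_tau :: "'a::metric_space set \<Rightarrow> real \<Rightarrow> real \<Rightarrow> ereal" where
  "Lambda_tau X \<tau> \<epsilon> =
     (INF f\<in>{f. thresholding \<tau> X f}.
        Sup (insert 0 {ereal (\<epsilon> * L2_dist (f x) (f y) / dist x y) | x y.
                        x \<in> X \<and> y \<in> X \<and> dist x y \<ge> \<epsilon> * \<tau>}))"

definition Lambda :: "'a::metric_space set \<Rightarrow> real \<Rightarrow> ereal" where
  "Lambda X \<epsilon> = (SUP \<tau>\<in>{0<..}. Lambda_tau X \<tau> \<epsilon>)"

definition Lambda_nontrivial :: "'a::metric_space set \<Rightarrow> bool" where
  "Lambda_nontrivial X \<longleftrightarrow> Liminf (at_right 0) (\<lambda>\<epsilon>. Lambda X \<epsilon>) = 0"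

end

theory Submission imports Defs "HOL-Real_Asymp.Real_Asymp" begin

lemma L2_diff_summable:
  assumes "x \<in> L2" "y \<in> L2"
  shows "summable (\<lambda>n. (x n - y n)\<^sup>2)"
proof (rule summable_comparison_test)
  show "summable (\<lambda>n. 2 * (x n)\<^sup>2 + 2 * (y n)\<^sup>2)"
    using assms unfolding L2_def by (intro summable_add summable_mult) auto
  show "\<exists>N. \<forall>n\<ge>N. norm ((x n - y n)\<^sup>2) \<le> 2 * (x n)\<^sup>2 + 2 * (y n)\<^sup>2"
  proof (intro exI allI impI)
    fix n :: nat
    have e: "(x n - y n)\<^sup>2 + (x n + y n)\<^sup>2 = 2 * (x n)\<^sup>2 + 2 * (y n)\<^sup>2"
      by (simp add: power2_eq_square algebra_simps)
    have "0 \<le> (x n + y n)\<^sup>2" by simp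
    moreover have "norm ((x n - y n)\<^sup>2) = (x n - y n)\<^sup>2" by simp
    ultimately show "norm ((x n - y n)\<^sup>2) \<le> 2 * (x n)\<^sup>2 + 2 * (y n)\<^sup>2" using e by linarith
  qed
qed

lemma L2_dist_nonneg: "x \<in> L2 \<Longrightarrow> y \<in> L2 \<Longrightarrow> 0 \<le> L2_dist x y"
  unfolding L2_dist_def by (intro real_sqrt_ge_zero suminf_nonneg L2_diff_summable) auto

lemma L2_partial_le:
  assumes "x \<in> L2" "y \<in> L2"
  shows "L2_set (\<lambda>n. x n - y n) {..<N} \<le> L2_dist x y"
  unfolding L2_set_def L2_dist_def
  by (intro real_sqrt_le_mono sum_le_suminf L2_diff_summable assms) auto

lemma L2_dist_triangle:
  assumes "x \<in> L2" "y \<in> L2" "z \<in> L2"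
  shows "L2_dist x z \<le> L2_dist x y + L2_dist y z"
proof -
  define B where "B = L2_dist x y + L2_dist y z"
  have B0: "0 \<le> B" unfolding B_def using assms L2_dist_nonneg by (meson add_nonneg_nonneg)
  have "\<forall>N. (\<Sum>n<N. (x n - z n)\<^sup>2) \<le> B\<^sup>2"
  proof
    fix N
    have "L2_set (\<lambda>n. x n - z n) {..<N} = L2_set (\<lambda>n. (x n - y n) + (y n - z n)) {..<N}" by simp
    also have "\<dots> \<le> L2_set (\<lambda>n. x n - y n) {..<N} + L2_set (\<lambda>n. y n - z n) {..<N}"
      by (rule L2_set_triangle_ineq)
    also have "\<dots> \<le> B" unfolding B_def using L2_partial_le assms by (meson add_mono)
    finally have "sqrt (\<Sum>n<N. (x n - z n)\<^sup>2) \<le> B" unfolding L2_set_def .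
    moreover have s0: "0 \<le> (\<Sum>n<N. (x n - z n)\<^sup>2)" by (intro sum_nonneg) auto
    ultimately have "(sqrt (\<Sum>n<N. (x n - z n)\<^sup>2))\<^sup>2 \<le> B\<^sup>2"
      by (intro power_mono) auto
    with s0 show "(\<Sum>n<N. (x n - z n)\<^sup>2) \<le> B\<^sup>2" by simp
  qed
  then have "(\<Sum>n. (x n - z n)\<^sup>2) \<le> B\<^sup>2"
    by (intro suminf_le_const L2_diff_summable assms) auto
  then have "L2_dist x z \<le> sqrt (B\<^sup>2)" unfolding L2_dist_def by (rule real_sqrt_le_mono)
  then show ?thesis using B0 unfolding B_def by simp
qed

lemma L2_scale: "x \<in> L2 \<Longrightarrow> (\<lambda>n. c * x n) \<in> L2"
  unfolding L2_def by (auto simp: power_mult_distrib intro: summable_mult)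

lemma L2_dist_scale:
  assumes "x \<in> L2" "y \<in> L2"
  shows "L2_dist (\<lambda>n. c * x n) (\<lambda>n. c * y n) = \<bar>c\<bar> * L2_dist x y"
proof -
  have "(\<Sum>n. (c * x n - c * y n)\<^sup>2) = (\<Sum>n. c\<^sup>2 * (x n - y n)\<^sup>2)"
    by (simp add: power_mult_distrib right_diff_distrib[symmetric])
  also have "\<dots> = c\<^sup>2 * (\<Sum>n. (x n - y n)\<^sup>2)"
    by (rule suminf_mult) (rule L2_diff_summable[OF assms])
  finally show ?thesis unfolding L2_dist_def by (simp add: real_sqrt_mult)
qed


lemma coarse_lip:
  fixes f :: "'a::real_normed_vector \<Rightarrow> (nat \<Rightarrow> real)"
  assumes L: "\<And>x. f x \<in> L2"
    and S: "\<And>x y. norm (x - y) \<le> 1 \<Longrightarrow> L2_dist (f x) (f y) \<le> a"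
  shows "L2_dist (f x) (f y) \<le> a * (norm (x - y) + 1)"
proof -
  have a0: "0 \<le> a" using S[of x x] by (simp add: L2_dist_def)
  define d where "d = norm (x - y)"
  show ?thesis
  proof (cases "d = 0")
    case True
    then have "x = y" unfolding d_def by simp
    then show ?thesis using a0 by (simp add: L2_dist_def)
  next
    case False
    then have dpos: "d > 0" unfolding d_def by simp
    define n where "n = nat \<lceil>d\<rceil>"
    have nd: "real n \<ge> d" "real n < d + 1" unfolding n_def using dpos by linarith+
    then have npos: "real n > 0" using dpos by linarith
    define p where "p k = x + (real k / real n) *\<^sub>R (y - x)" for k
    have step: "norm (p k - p (Suc k)) \<le> 1" for k
    proof -
      have "p k - p (Suc k) = - ((1 / real n) *\<^sub>R (y - x))"
        unfolding p_def using npos by (simp add: algebra_simps add_divide_distrib scaleR_left_distrib)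
      then have "norm (p k - p (Suc k)) = d / real n"
        unfolding d_def using npos by (simp add: norm_minus_commute)
      then show ?thesis using nd npos by simp
    qed
    have chain: "L2_dist (f x) (f (p k)) \<le> real k * a" for k
    proof (induction k)
      case 0
      then show ?case by (simp add: p_def L2_dist_def)
    next
      case (Suc k)
      have "L2_dist (f x) (f (p (Suc k))) \<le> L2_dist (f x) (f (p k)) + L2_dist (f (p k)) (f (p (Suc k)))"
        by (intro L2_dist_triangle L)
      also have "\<dots> \<le> real k * a + a" using Suc S[OF step] by (meson add_mono)
      finally show ?case by (simp add: algebra_simps)
    qed
    have "p n = y" unfolding p_def using npos by simp
    then have "L2_dist (f x) (f y) \<le> real n * a" using chain[of n] by simp
    also have "\<dots> \<le> (d + 1) * a" using nd a0 by (intro mult_right_mono) auto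
    finally show ?thesis unfolding d_def by (simp add: mult.commute)
  qed
qed


lemma arith_bound:
  fixes a b d D R \<tau> \<epsilon> :: real
  assumes "a \<ge> 0" "b > 0" "R > 0" "\<tau> > 0" "\<epsilon> > 0" "d \<ge> \<epsilon> * \<tau>"
    and "D \<le> a * ((R / \<tau>) * d + 1)"
  shows "\<epsilon> * ((\<tau> / b) * D) / d \<le> a * (\<epsilon> * R + 1) / b"
proof -
  have dpos: "d > 0" using assms by (smt (verit) mult_pos_pos)
  have "\<epsilon> * ((\<tau> / b) * D) / d \<le> \<epsilon> * ((\<tau> / b) * (a * ((R / \<tau>) * d + 1))) / d"
    using assms dpos by (intro divide_right_mono mult_left_mono) auto
  also have "\<dots> = (a / b) * (\<epsilon> * R + \<epsilon> * \<tau> / d)"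
    using assms dpos by (simp add: field_simps)
  also have "\<dots> \<le> (a / b) * (\<epsilon> * R + 1)"
    using assms dpos by (intro mult_left_mono add_left_mono) (auto simp: field_simps)
  finally show ?thesis by simp
qed

lemma lambda_bound:
  fixes f :: "'a::real_normed_vector \<Rightarrow> (nat \<Rightarrow> real)"
  assumes L: "\<And>x. f x \<in> L2"
    and Lip: "\<And>x y. L2_dist (f x) (f y) \<le> a * (norm (x - y) + 1)"
    and a0: "0 \<le> a" and b0: "b > 0" and R0: "R > 0" and e0: "\<epsilon> > 0"
    and Bd: "\<And>x y. R \<le> norm (x - y) \<Longrightarrow> b \<le> L2_dist (f x) (f y)"
  shows "Lambda (UNIV :: 'a set) \<epsilon> \<le> ereal (a * (\<epsilon> * R + 1) / b)"
  unfolding Lambda_def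
proof (rule SUP_least)
  fix \<tau> :: real assume "\<tau> \<in> {0<..}"
  then have t0: "\<tau> > 0" by simp
  define g where "g x = (\<lambda>n. (\<tau> / b) * f ((R / \<tau>) *\<^sub>R x) n)" for x
  have gL: "g x \<in> L2" for x unfolding g_def by (rule L2_scale[OF L])
  have gd: "L2_dist (g x) (g y) = (\<tau> / b) * L2_dist (f ((R / \<tau>) *\<^sub>R x)) (f ((R / \<tau>) *\<^sub>R y))" for x y
    unfolding g_def L2_dist_scale[OF L L] using t0 b0 by simp
  have nrm: "norm ((R / \<tau>) *\<^sub>R x - (R / \<tau>) *\<^sub>R y) = (R / \<tau>) * dist x y" for x y
    using t0 R0 by (simp add: dist_norm scaleR_diff_right[symmetric])
  have thr: "thresholding \<tau> UNIV g"
    unfolding thresholding_def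
  proof (intro conjI ballI impI)
    fix x y :: 'a assume "\<tau> \<le> dist x y"
    then have "R \<le> (R / \<tau>) * dist x y" using t0 R0 by (simp add: field_simps)
    then have "b \<le> L2_dist (f ((R / \<tau>) *\<^sub>R x)) (f ((R / \<tau>) *\<^sub>R y))"
      using Bd nrm by metis
    then have "(\<tau> / b) * b \<le> L2_dist (g x) (g y)" unfolding gd using t0 b0
      by (intro mult_left_mono) auto
    then show "\<tau> \<le> L2_dist (g x) (g y)" using b0 by simp
  qed (use gL in auto)
  have "Sup (insert 0 {ereal (\<epsilon> * L2_dist (g x) (g y) / dist x y) | x y.
                        x \<in> UNIV \<and> y \<in> UNIV \<and> dist x y \<ge> \<epsilon> * \<tau>}) \<le> ereal (a * (\<epsilon> * R + 1) / b)"
  proof (rule Sup_least)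
    fix z assume "z \<in> insert 0 {ereal (\<epsilon> * L2_dist (g x) (g y) / dist x y) | x y.
                        x \<in> UNIV \<and> y \<in> UNIV \<and> dist x y \<ge> \<epsilon> * \<tau>}"
    then consider "z = 0" | x y where "z = ereal (\<epsilon> * L2_dist (g x) (g y) / dist x y)" "dist x y \<ge> \<epsilon> * \<tau>"
      by blast
    then show "z \<le> ereal (a * (\<epsilon> * R + 1) / b)"
    proof cases
      case 1 then show ?thesis using a0 b0 e0 R0 by simp
    next
      case (2 x y)
      have "L2_dist (f ((R / \<tau>) *\<^sub>R x)) (f ((R / \<tau>) *\<^sub>R y)) \<le> a * ((R / \<tau>) * dist x y + 1)"
        using Lip nrm by metis
      then have "\<epsilon> * ((\<tau> / b) * L2_dist (f ((R / \<tau>) *\<^sub>R x)) (f ((R / \<tau>) *\<^sub>R y))) / dist x y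
                  \<le> a * (\<epsilon> * R + 1) / b"
        using arith_bound a0 b0 R0 t0 e0 2(2) by blast
      then show ?thesis using 2(1) gd by (simp add: mult.assoc)
    qed
  qed
  moreover have "Lambda_tau (UNIV :: 'a set) \<tau> \<epsilon> \<le> Sup (insert 0 {ereal (\<epsilon> * L2_dist (g x) (g y) / dist x y) | x y.
                        x \<in> UNIV \<and> y \<in> UNIV \<and> dist x y \<ge> \<epsilon> * \<tau>})"
    unfolding Lambda_tau_def
    apply (rule INF_lower)
    using thr by simp
  ultimately show "Lambda_tau (UNIV :: 'a set) \<tau> \<epsilon> \<le> ereal (a * (\<epsilon> * R + 1) / b)"
    by (rule order_trans[rotated])
qed

lemma Lambda_nonneg: "0 \<le> Lambda (UNIV :: 'a::metric_space set) \<epsilon>"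
proof -
  have "0 \<le> Lambda_tau (UNIV :: 'a set) 1 \<epsilon>"
    unfolding Lambda_tau_def by (intro INF_greatest Sup_upper) auto
  also have "\<dots> \<le> Lambda (UNIV :: 'a set) \<epsilon>"
    unfolding Lambda_def by (intro SUP_upper) auto
  finally show ?thesis .
qed

theorem lemma5p6:
  fixes f :: "'a::banach \<Rightarrow> (nat \<Rightarrow> real)"
  assumes "coarse_embedding_L2 f"
  shows "Lambda_nontrivial (UNIV :: 'a set)"
proof -
  obtain \<alpha> \<beta> :: "real \<Rightarrow> real" where L: "\<And>x. f x \<in> L2"
    and ma: "mono_on {0..} \<alpha>" and mb: "mono_on {0..} \<beta>"
    and pos: "\<And>t. t \<ge> 0 \<Longrightarrow> \<alpha> t \<ge> 0 \<and> \<beta> t \<ge> 0"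
    and lim: "filterlim \<beta> at_top at_top"
    and bd: "\<And>x y. \<beta> (norm (x - y)) \<le> L2_dist (f x) (f y) \<and> L2_dist (f x) (f y) \<le> \<alpha> (norm (x - y))"
    using assms unfolding coarse_embedding_L2_def by blast
  define a where "a = \<alpha> 1"
  have a0: "0 \<le> a" unfolding a_def using pos[of 1] by simp
  have Lip: "L2_dist (f x) (f y) \<le> a * (norm (x - y) + 1)" for x y
  proof (rule coarse_lip[OF L])
    fix x y :: 'a assume "norm (x - y) \<le> 1"
    then have "\<alpha> (norm (x - y)) \<le> \<alpha> 1" using ma by (auto intro: mono_onD)
    then show "L2_dist (f x) (f y) \<le> a" using bd[of x y] unfolding a_def by linarith
  qed
  define R where "R \<epsilon> = 1 / sqrt \<epsilon>" for \<epsilon> :: real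
  define h where "h \<epsilon> = a * (\<epsilon> * R \<epsilon> + 1) / \<beta> (R \<epsilon>)" for \<epsilon>
  have Rlim: "filterlim R at_top (at_right 0)" unfolding R_def by real_asymp
  have blim: "filterlim (\<lambda>\<epsilon>. \<beta> (R \<epsilon>)) at_top (at_right 0)"
    by (rule filterlim_compose[OF lim Rlim])
  have ev_b: "eventually (\<lambda>\<epsilon>. \<beta> (R \<epsilon>) > 0) (at_right 0)"
    using blim by (simp add: filterlim_at_top_dense)
  have ev_e: "eventually (\<lambda>\<epsilon>::real. \<epsilon> > 0) (at_right 0)"
    by (simp add: eventually_at_right_less)
  have ev: "eventually (\<lambda>\<epsilon>. Lambda (UNIV :: 'a set) \<epsilon> \<le> ereal (h \<epsilon>)) (at_right 0)"
    using ev_b ev_e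
  proof eventually_elim
    case (elim \<epsilon>)
    have R0: "R \<epsilon> > 0" unfolding R_def using elim by simp
    show ?case unfolding h_def
    proof (rule lambda_bound[OF L Lip a0 elim(1) R0 elim(2)])
      fix x y :: 'a assume "R \<epsilon> \<le> norm (x - y)"
      then have "\<beta> (R \<epsilon>) \<le> \<beta> (norm (x - y))" using mb R0 by (auto intro: mono_onD)
      then show "\<beta> (R \<epsilon>) \<le> L2_dist (f x) (f y)" using bd[of x y] by linarith
    qed
  qed
  have h1: "((\<lambda>\<epsilon>. a * (\<epsilon> * R \<epsilon> + 1)) \<longlongrightarrow> a * (0 + 1)) (at_right 0)"
    unfolding R_def by (intro tendsto_intros) real_asymp
  have h2: "((\<lambda>\<epsilon>. inverse (\<beta> (R \<epsilon>))) \<longlongrightarrow> 0) (at_right 0)"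
    by (rule tendsto_inverse_0_at_top[OF blim])
  have hh: "(h \<longlongrightarrow> a * (0 + 1) * 0) (at_right 0)"
    unfolding h_def divide_inverse by (rule tendsto_mult[OF h1 h2])
  have hl: "((\<lambda>\<epsilon>. ereal (h \<epsilon>)) \<longlongrightarrow> 0) (at_right 0)"
    using tendsto_ereal[OF hh] by (simp add: zero_ereal_def)
  have "((\<lambda>\<epsilon>. Lambda (UNIV :: 'a set) \<epsilon>) \<longlongrightarrow> 0) (at_right 0)"
    by (rule tendsto_sandwich[OF _ ev tendsto_const hl]) (simp add: Lambda_nonneg)
  then show ?thesis unfolding Lambda_nontrivial_def
    by (intro lim_imp_Liminf) auto
qed

end
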